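(* Let $m,k\in\mathbb{N}$ and let $\alpha\in\mathbb{C}$ with $\alpha,\ 1+\alpha+2m+k,\ 1+\alpha+2m\notin\mathbb{Z}_0^-$. Then \[ {}_3F_2\left[\begin{array}{r} -2m,\ \alpha,\ 1+\alpha+2m+k;\\ -2m-k,\ 1+\alpha+2m;\end{array}1\right]_{2m}=\frac{(1+\alpha)_{2m}\left(1+\frac{\alpha}{2}+k\right)_{2m}}{\left(1+\frac{\alpha}{2}\right)_{2m}(1+k)_{2m}}. \]
   Context: $\mathbb{N}=\{1,2,3,\dots\}$, $\mathbb{Z}_0^-=\{0,-1,-2,\dots\}$. For $a\in\mathbb{C}$ and $n\in\mathbb{N}_0$, $(a)_0=1$ and $(a)_n=a(a+1)\cdots(a+n-1)$. For $N\in\mathbb{N}_0$, ${}_3F_2\left[\begin{array}{r} a_1,a_2,a_3;\\ b_1,b_2;\end{array}z\right]_N=\sum_{n=0}^{N}\frac{(a_1)_n(a_2)_n(a_3)_n}{(b_1)_n(b_2)_n}\frac{z^n}{n!}$ (the sum of the first $N+1$ terms), defined whenever $(b_1)_n(b_2)_n\neq0$ for $0\le n\le N$. *)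

theory Defs
  imports "HOL-Analysis.Analysis"
begin

definition hyp3F2_trunc ::
  "complex \<Rightarrow> complex \<Rightarrow> complex \<Rightarrow> complex \<Rightarrow> complex \<Rightarrow> complex \<Rightarrow> nat \<Rightarrow> complex" where
  "hyp3F2_trunc a1 a2 a3 b1 b2 z N =
     (\<Sum>n=0..N. pochhammer a1 n * pochhammer a2 n * pochhammer a3 n
        / (pochhammer b1 n * pochhammer b2 n) * z ^ n / of_nat (fact n))"

end

theory Submission
  imports Defs
begin

lemma fact_poch: "(fact a :: complex) * pochhammer (of_nat a + 1) b = fact (a + b)"
proof (induction b)
  case 0 then show ?case by simp
next
  case (Suc b)
  have "(fact a :: complex) * pochhammer (of_nat a + 1) (Suc b)
       = (fact a * pochhammer (of_nat a + 1) b) * (of_nat a + 1 + of_nat b)"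
    by (simp add: pochhammer_Suc mult.assoc)
  also have "\<dots> = fact (a + b) * of_nat (Suc (a + b))" using Suc by simp
  also have "\<dots> = fact (a + Suc b)" by (simp add: algebra_simps)
  finally show ?case .
qed

definition aa :: "nat \<Rightarrow> nat \<Rightarrow> complex \<Rightarrow> nat \<Rightarrow> complex" where
  "aa N k x n = of_nat (N choose n) * of_nat (fact (N + k - n)) * pochhammer x n
      * pochhammer (1 + x + of_nat N + of_nat n) k"

definition pp :: "nat \<Rightarrow> nat \<Rightarrow> complex \<Rightarrow> nat \<Rightarrow> complex" where
  "pp N k x n = (1 + x/2 + of_nat k) * (of_nat N + of_nat k + 1 - of_nat n) * (1 + x + of_nat N + of_nat n + of_nat k)
     - (of_nat k + 1) * (1 + x + of_nat N + of_nat k) * (1 + x/2 + of_nat N + of_nat k)"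

definition qq :: "nat \<Rightarrow> nat \<Rightarrow> complex \<Rightarrow> nat \<Rightarrow> complex" where
  "qq N k x n = (of_nat N + 1 - of_nat n) * (x + of_nat n - 1) * (x + of_nat N + of_nat n + of_nat k) / 2"

lemma qp: "qq N k x (Suc n) - pp N k x n = of_nat n * (of_nat N + of_nat k + 1 - of_nat n) * (x + of_nat N + of_nat n) / 2"
  unfolding qq_def pp_def by (simp add: field_simps)

lemma aa_step:
  assumes "j < N"
  shows "aa N k x (Suc j) * (of_nat (Suc j) * (of_nat N + of_nat k - of_nat j) * (x + of_nat N + of_nat j + 1))
       = aa N k x j * ((of_nat N - of_nat j) * (x + of_nat j) * (x + of_nat N + of_nat j + 1 + of_nat k))"
proof -
  have b: "of_nat (N choose Suc j) * (of_nat (Suc j) :: complex) = of_nat (N choose j) * (of_nat N - of_nat j)"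
  proof -
    have "(N choose Suc j) * Suc j = (N choose j) * (N - j)"
      using binomial_absorb_comp[of N j] binomial_absorption[of j N] by (simp add: mult.commute)
    hence "(of_nat ((N choose Suc j) * Suc j) :: complex) = of_nat ((N choose j) * (N - j))" by simp
    thus ?thesis by (simp only: of_nat_mult of_nat_diff[OF less_imp_le[OF assms]])
  qed
  have f: "(of_nat (fact (N + k - j)) :: complex) = of_nat (fact (N + k - Suc j)) * (of_nat N + of_nat k - of_nat j)"
  proof -
    have "N + k - j = Suc (N + k - Suc j)" using assms by simp
    hence "fact (N + k - j) = fact (N + k - Suc j) * (N + k - j)"
      by (simp only: fact_Suc) (simp add: mult.commute)
    hence "(of_nat (fact (N + k - j)) :: complex) = of_nat (fact (N + k - Suc j) * (N + k - j))" by simp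
    thus ?thesis using assms by (simp add: of_nat_diff)
  qed
  have p1: "pochhammer x (Suc j) = pochhammer x j * (x + of_nat j)" by (rule pochhammer_Suc)
  have p2: "pochhammer (1 + x + of_nat N + of_nat (Suc j)) k * (x + of_nat N + of_nat j + 1)
         = pochhammer (1 + x + of_nat N + of_nat j) k * (x + of_nat N + of_nat j + 1 + of_nat k)"
  proof -
    have "pochhammer (1 + x + of_nat N + of_nat j) (Suc k) = (1 + x + of_nat N + of_nat j) * pochhammer (1 + x + of_nat N + of_nat j + 1) k"
      by (rule pochhammer_rec)
    moreover have "pochhammer (1 + x + of_nat N + of_nat j) (Suc k) = pochhammer (1 + x + of_nat N + of_nat j) k * (1 + x + of_nat N + of_nat j + of_nat k)"
      by (rule pochhammer_Suc)
    ultimately show ?thesis by (simp add: algebra_simps)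
  qed
  define C0 where "C0 = (of_nat (N choose j) :: complex)"
  define C1 where "C1 = (of_nat (N choose Suc j) :: complex)"
  define F1 where "F1 = (of_nat (fact (N + k - Suc j)) :: complex)"
  define P0 where "P0 = pochhammer (1 + x + of_nat N + of_nat j) k"
  define P1 where "P1 = pochhammer (1 + x + of_nat N + of_nat (Suc j)) k"
  have e1: "aa N k x (Suc j) = C1 * F1 * (pochhammer x j * (x + of_nat j)) * P1"
    unfolding aa_def C1_def F1_def P1_def p1 by simp
  have e2: "aa N k x j = C0 * (F1 * (of_nat N + of_nat k - of_nat j)) * pochhammer x j * P0"
    unfolding aa_def C0_def F1_def P0_def f by simp
  have b': "C1 * of_nat (Suc j) = C0 * (of_nat N - of_nat j)" using b C0_def C1_def by simp
  have p2': "P1 * (x + of_nat N + of_nat j + 1) = P0 * (x + of_nat N + of_nat j + 1 + of_nat k)"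
    using p2 P0_def P1_def by simp
  have "aa N k x (Suc j) * (of_nat (Suc j) * (of_nat N + of_nat k - of_nat j) * (x + of_nat N + of_nat j + 1))
     = (C1 * of_nat (Suc j)) * F1 * (of_nat N + of_nat k - of_nat j) * pochhammer x j * (x + of_nat j) * (P1 * (x + of_nat N + of_nat j + 1))"
    unfolding e1 by (simp only: ac_simps)
  also have "\<dots> = (C0 * (of_nat N - of_nat j)) * F1 * (of_nat N + of_nat k - of_nat j) * pochhammer x j * (x + of_nat j) * (P0 * (x + of_nat N + of_nat j + 1 + of_nat k))"
    unfolding b' p2' ..
  also have "\<dots> = aa N k x j * ((of_nat N - of_nat j) * (x + of_nat j) * (x + of_nat N + of_nat j + 1 + of_nat k))"
    unfolding e2 by (simp only: ac_simps)
  finally show ?thesis .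
qed


lemma tele:
  assumes "M \<le> N"
  shows "(\<Sum>n=0..M. aa N k x n * pp N k x n) = aa N k x M * qq N k x (Suc M)"
  using assms
proof (induction M)
  case 0
  have "qq N k x (Suc 0) - pp N k x 0 = 0" using qp[of N k x 0] by simp
  then show ?case by simp
next
  case (Suc M)
  have MN: "M < N" using Suc.prems by simp
  have IH: "(\<Sum>n=0..M. aa N k x n * pp N k x n) = aa N k x M * qq N k x (Suc M)"
    using Suc.IH MN by simp
  have q1: "qq N k x (Suc (Suc M)) - pp N k x (Suc M)
      = (of_nat (Suc M) * (of_nat N + of_nat k - of_nat M) * (x + of_nat N + of_nat M + 1)) / 2"
    using qp[of N k x "Suc M"] by (simp add: algebra_simps)
  have q2: "qq N k x (Suc M) = ((of_nat N - of_nat M) * (x + of_nat M) * (x + of_nat N + of_nat M + 1 + of_nat k)) / 2"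
    unfolding qq_def by (simp add: algebra_simps)
  have key: "aa N k x (Suc M) * (qq N k x (Suc (Suc M)) - pp N k x (Suc M)) = aa N k x M * qq N k x (Suc M)"
    unfolding q1 q2 using aa_step[OF MN, of k x] by (simp add: mult.assoc)
  have "(\<Sum>n=0..Suc M. aa N k x n * pp N k x n) = aa N k x M * qq N k x (Suc M) + aa N k x (Suc M) * pp N k x (Suc M)"
    using IH by simp
  also have "\<dots> = aa N k x (Suc M) * qq N k x (Suc (Suc M))"
    using key by (simp add: algebra_simps)
  finally show ?case .
qed

lemma tele_full: "(\<Sum>n=0..N. aa N k x n * pp N k x n) = 0"
  using tele[of N N k x] by (simp add: qq_def)

lemma aa_Suc:
  assumes "n \<le> N"
  shows "aa N (Suc k) x n = aa N k x n * ((of_nat N + of_nat k + 1 - of_nat n) * (1 + x + of_nat N + of_nat n + of_nat k))"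
proof -
  have "N + Suc k - n = Suc (N + k - n)" using assms by simp
  hence "fact (N + Suc k - n) = fact (N + k - n) * (N + k + 1 - n)"
    using assms by (simp only: fact_Suc) (simp add: mult.commute Suc_diff_le)
  hence f: "(of_nat (fact (N + Suc k - n)) :: complex) = of_nat (fact (N + k - n)) * (of_nat N + of_nat k + 1 - of_nat n)"
    using assms by (simp add: of_nat_diff)
  show ?thesis unfolding aa_def f pochhammer_Suc by (simp only: ac_simps)
qed

definition AA :: "nat \<Rightarrow> nat \<Rightarrow> complex \<Rightarrow> complex" where
  "AA N k x = (\<Sum>n=0..N. aa N k x n)"

lemma AA_rec:
  "(1 + x/2 + of_nat k) * AA N (Suc k) x
     = (of_nat k + 1) * (1 + x + of_nat N + of_nat k) * (1 + x/2 + of_nat N + of_nat k) * AA N k x"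
proof -
  have "(1 + x/2 + of_nat k) * AA N (Suc k) x
     - (of_nat k + 1) * (1 + x + of_nat N + of_nat k) * (1 + x/2 + of_nat N + of_nat k) * AA N k x
     = (\<Sum>n=0..N. aa N k x n * pp N k x n)"
    unfolding AA_def sum_distrib_left sum_subtractf[symmetric]
  proof (rule sum.cong[OF refl])
    fix n assume "n \<in> {0..N}"
    hence "n \<le> N" by simp
    show "(1 + x/2 + of_nat k) * aa N (Suc k) x n
       - (of_nat k + 1) * (1 + x + of_nat N + of_nat k) * (1 + x/2 + of_nat N + of_nat k) * aa N k x n
       = aa N k x n * pp N k x n"
      unfolding aa_Suc[OF \<open>n \<le> N\<close>] pp_def by (simp add: field_simps)
  qed
  thus ?thesis using tele_full[of N k x] by simp
qed

lemma poch_over_fact: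
  "(\<Sum>n=0..N. pochhammer (x::complex) n / fact n) = pochhammer (1 + x) N / fact N"
proof (induction N)
  case 0 then show ?case by simp
next
  case (Suc N)
  have "(\<Sum>n=0..Suc N. pochhammer x n / fact n) = pochhammer (1 + x) N / fact N + pochhammer x (Suc N) / fact (Suc N)"
    using Suc by simp
  also have "\<dots> = (of_nat (Suc N) * pochhammer (1 + x) N + x * pochhammer (x + 1) N) / fact (Suc N)"
    by (simp add: pochhammer_rec field_simps del: of_nat_Suc)
  also have "\<dots> = pochhammer (1 + x) (Suc N) / fact (Suc N)"
    by (simp add: pochhammer_Suc algebra_simps)
  finally show ?case .
qed

lemma AA_0: "AA N 0 x = pochhammer (1 + x) N"
proof -
  have "AA N 0 x = (\<Sum>n=0..N. fact N * (pochhammer x n / fact n))"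
    unfolding AA_def aa_def
  proof (rule sum.cong[OF refl])
    fix n assume "n \<in> {0..N}"
    hence nN: "n \<le> N" by simp
    have "(of_nat (N choose n) :: complex) = fact N / (fact n * fact (N - n))" by (rule binomial_fact[OF nN])
    thus "of_nat (N choose n) * of_nat (fact (N + 0 - n)) * pochhammer x n * pochhammer (1 + x + of_nat N + of_nat n) 0
        = fact N * (pochhammer x n / fact n)"
      by (simp add: field_simps)
  qed
  also have "\<dots> = fact N * (pochhammer (1 + x) N / fact N)"
    by (simp only: sum_distrib_left[symmetric] poch_over_fact)
  finally show ?thesis by simp
qed

lemma AA_closed:
  "AA N k x * pochhammer (1 + x/2) k = fact k * pochhammer (1 + x) (N + k) * pochhammer (1 + x/2 + of_nat N) k"
proof (induction k)
  case 0 then show ?case by (simp add: AA_0)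
next
  case (Suc k)
  have "AA N (Suc k) x * pochhammer (1 + x/2) (Suc k) = ((1 + x/2 + of_nat k) * AA N (Suc k) x) * pochhammer (1 + x/2) k"
    by (simp add: pochhammer_Suc algebra_simps)
  also have "\<dots> = (of_nat k + 1) * (1 + x + of_nat N + of_nat k) * (1 + x/2 + of_nat N + of_nat k) * (AA N k x * pochhammer (1 + x/2) k)"
    unfolding AA_rec by (simp add: algebra_simps)
  also have "\<dots> = (of_nat k + 1) * (1 + x + of_nat N + of_nat k) * (1 + x/2 + of_nat N + of_nat k) * (fact k * pochhammer (1 + x) (N + k) * pochhammer (1 + x/2 + of_nat N) k)"
    unfolding Suc ..
  also have "\<dots> = fact (Suc k) * pochhammer (1 + x) (N + Suc k) * pochhammer (1 + x/2 + of_nat N) (Suc k)"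
    by (simp add: pochhammer_Suc algebra_simps)
  finally show ?case .
qed


lemma poch_nz:
  assumes "(z::complex) \<notin> \<int>\<^sub>\<le>\<^sub>0"
  shows "pochhammer z j \<noteq> 0"
  using assms by (auto simp: pochhammer_eq_0_iff)

lemma poch_neg_nat:
  assumes "n \<le> N"
  shows "pochhammer (- of_nat N :: complex) n = (-1) ^ n * fact N / fact (N - n)"
proof -
  have e: "(of_nat N :: complex) - of_nat n + 1 = of_nat (N - n) + 1" using assms by (simp add: of_nat_diff)
  have "fact (N - n) * pochhammer (of_nat (N - n) + 1 :: complex) n = fact (N - n + n)" by (rule fact_poch)
  hence "fact (N - n) * pochhammer (of_nat (N - n) + 1 :: complex) n = fact N" using assms by simp
  hence "pochhammer (of_nat (N - n) + 1 :: complex) n = fact N / fact (N - n)"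
    by (simp add: field_simps)
  thus ?thesis by (simp add: pochhammer_minus e)
qed

lemma term_eq:
  fixes x :: complex
  assumes nN: "n \<le> N" and h: "1 + x + of_nat N \<notin> \<int>\<^sub>\<le>\<^sub>0"
  shows "pochhammer (- of_nat N) n * pochhammer x n * pochhammer (1 + x + of_nat N + of_nat k) n
        / (pochhammer (- of_nat N - of_nat k) n * pochhammer (1 + x + of_nat N) n) * 1 ^ n / of_nat (fact n)
      = aa N k x n / (fact (N + k) * pochhammer (1 + x + of_nat N) k)"
proof -
  define PA where "PA = pochhammer (1 + x + of_nat N) n"
  define PB where "PB = pochhammer (1 + x + of_nat N) k"
  define PD where "PD = pochhammer (1 + x + of_nat N + of_nat n) k"
  have PAnz: "PA \<noteq> 0" unfolding PA_def by (rule poch_nz[OF h])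
  have PBnz: "PB \<noteq> 0" unfolding PB_def by (rule poch_nz[OF h])
  have "pochhammer (1 + x + of_nat N) (n + k) = PA * PD" unfolding PA_def PD_def by (rule pochhammer_product')
  moreover have "pochhammer (1 + x + of_nat N) (k + n) = PB * pochhammer (1 + x + of_nat N + of_nat k) n"
    unfolding PB_def by (rule pochhammer_product')
  ultimately have PC: "pochhammer (1 + x + of_nat N + of_nat k) n = PA * PD / PB"
    using PBnz by (simp add: add.commute field_simps)
  have m1: "pochhammer (- of_nat N) n = (-1) ^ n * fact N / (fact (N - n) :: complex)" by (rule poch_neg_nat[OF nN])
  have m2: "pochhammer (- of_nat N - of_nat k) n = (-1) ^ n * fact (N + k) / (fact (N + k - n) :: complex)"
    using poch_neg_nat[of n "N + k"] nN by simp
  have C: "(of_nat (N choose n) :: complex) = fact N / (fact n * fact (N - n))" by (rule binomial_fact[OF nN])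
  have "(of_nat (fact (N + k - n)) :: complex) = fact (N + k - n)" by simp
  show ?thesis
    unfolding aa_def m1 m2 PC C PA_def[symmetric] PB_def[symmetric] PD_def[symmetric]
    using PAnz PBnz by (simp add: field_simps)
qed

lemma main_gen:
  fixes x :: complex
  assumes h0: "x \<notin> \<int>\<^sub>\<le>\<^sub>0" and h: "1 + x + of_nat N \<notin> \<int>\<^sub>\<le>\<^sub>0"
  shows "hyp3F2_trunc (- of_nat N) x (1 + x + of_nat N + of_nat k) (- of_nat N - of_nat k) (1 + x + of_nat N) 1 N
       = pochhammer (1 + x) N * pochhammer (1 + x / 2 + of_nat k) N
         / (pochhammer (1 + x / 2) N * pochhammer (1 + of_nat k) N)"
proof -
  define PB where "PB = pochhammer (1 + x + of_nat N) k"
  have PBnz: "PB \<noteq> 0" unfolding PB_def by (rule poch_nz[OF h])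
  have hh: "1 + x / 2 \<notin> \<int>\<^sub>\<le>\<^sub>0"
  proof
    assume "1 + x / 2 \<in> \<int>\<^sub>\<le>\<^sub>0"
    then obtain i where i: "1 + x / 2 = - of_nat i" by (auto elim!: nonpos_Ints_cases')
    have "x = 2 * (1 + x / 2) - 2" by simp
    also have "\<dots> = - of_nat (2 * i + 2)" unfolding i by simp
    finally have "x = - of_nat (2 * i + 2)" .
    thus False using h0 by (metis minus_of_nat_in_nonpos_Ints)
  qed
  have Pk: "pochhammer (1 + x / 2) k \<noteq> 0" by (rule poch_nz[OF hh])
  have PN: "pochhammer (1 + x / 2) N \<noteq> 0" by (rule poch_nz[OF hh])
  have fk: "pochhammer (1 + of_nat k :: complex) N = fact (k + N) / fact k"
    using fact_poch[of k N] by (simp add: field_simps add.commute)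
  have r1: "pochhammer (1 + x / 2 + of_nat k) N = pochhammer (1 + x / 2) N * pochhammer (1 + x / 2 + of_nat N) k / pochhammer (1 + x / 2) k"
  proof -
    have "pochhammer (1 + x / 2) (k + N) = pochhammer (1 + x / 2) k * pochhammer (1 + x / 2 + of_nat k) N"
      by (rule pochhammer_product')
    moreover have "pochhammer (1 + x / 2) (N + k) = pochhammer (1 + x / 2) N * pochhammer (1 + x / 2 + of_nat N) k"
      by (rule pochhammer_product')
    ultimately show ?thesis using Pk by (simp add: add.commute field_simps)
  qed
  have r2: "pochhammer (1 + x) (N + k) = pochhammer (1 + x) N * PB"
    unfolding PB_def by (simp add: pochhammer_product' add.assoc)
  have AAv: "AA N k x = fact k * pochhammer (1 + x) (N + k) * pochhammer (1 + x/2 + of_nat N) k / pochhammer (1 + x/2) k"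
    using AA_closed[of N k x] Pk by (simp add: field_simps)
  have "hyp3F2_trunc (- of_nat N) x (1 + x + of_nat N + of_nat k) (- of_nat N - of_nat k) (1 + x + of_nat N) 1 N
      = (\<Sum>n=0..N. aa N k x n / (fact (N + k) * PB))"
    unfolding hyp3F2_trunc_def PB_def
    by (rule sum.cong[OF refl], rule term_eq[OF _ h], simp)
  also have "\<dots> = AA N k x / (fact (N + k) * PB)"
    unfolding AA_def by (simp add: sum_divide_distrib)
  also have "\<dots> = pochhammer (1 + x) N * pochhammer (1 + x / 2 + of_nat k) N
         / (pochhammer (1 + x / 2) N * pochhammer (1 + of_nat k) N)"
    unfolding AAv r1 r2 fk using PBnz Pk PN by (simp add: field_simps add.commute)
  finally show ?thesis .
qed

theorem mainTheorem14:
  fixes m k :: nat and \<alpha> :: complex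
  assumes "m \<ge> 1" and "k \<ge> 1"
    and "\<alpha> \<notin> \<int>\<^sub>\<le>\<^sub>0"
    and "1 + \<alpha> + 2 * of_nat m + of_nat k \<notin> \<int>\<^sub>\<le>\<^sub>0"
    and "1 + \<alpha> + 2 * of_nat m \<notin> \<int>\<^sub>\<le>\<^sub>0"
  shows "hyp3F2_trunc (- 2 * of_nat m) \<alpha> (1 + \<alpha> + 2 * of_nat m + of_nat k)
            (- 2 * of_nat m - of_nat k) (1 + \<alpha> + 2 * of_nat m) 1 (2 * m)
       = pochhammer (1 + \<alpha>) (2 * m) * pochhammer (1 + \<alpha> / 2 + of_nat k) (2 * m)
         / (pochhammer (1 + \<alpha> / 2) (2 * m) * pochhammer (1 + of_nat k) (2 * m))"
proof -
  have e: "(2 * of_nat m :: complex) = of_nat (2 * m)" by simp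
  have e2: "(- 2 * of_nat m :: complex) = - of_nat (2 * m)" by simp
  show ?thesis unfolding e2 e using main_gen[of \<alpha> "2 * m" k] assms(3,5) by simp
qed

end
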